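(* Every Polish space, and every continuous domain endowed with its Scott topology, is a convergent approximation space.
   Context: Approximation relation: for a topological space $E$, an approximation relation is a binary relation $\ll$ on some topological basis $\mathcal{B}$ of $E$ such that for all $U,V,T\in\mathcal{B}$: (1) if $U\ll V$ then $V\subseteq U$; (2) if $U\subseteq T$ and $U\ll V$ then $T\ll V$; (3) for every $x\in U$ there exists $W\in\mathcal{B}$ with $x\in W$ and $U\ll W$; (4) for every sequence $(U_i)_{i\in\mathbb{N}}$ in $\mathcal{B}$ with $U_i\ll U_{i+1}$ for all $i$, $\bigcap_i U_i\neq\emptyset$. It is convergent if (4) is strengthened to (4$^+$): every such sequence is a neighborhood basis of some point of $\bigcap_i U_i$. A space is a convergent approximation space if it admits a convergent approximation relation. Domain notions: a dcpo is a poset $(D,\sqsubseteq)$ in which every nonempty directed subset has a supremum; its Scott topology has as open sets the upsets $O$ such that every directed set with supremum in $O$ meets $O$. The way-below relation: $x\ll y$ iff for every directed $S$ with $y\sqsubseteq\sqcup S$ there is $s\in S$ with $x\sqsubseteq s$. $D$ is a continuous domain if for every $x$ the set $\{z: z\ll x\}$ is directed with supremum $x$. *)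

theory Defs
  imports "HOL-Analysis.Analysis"
begin

definition topological_basis_of :: "'a topology \<Rightarrow> 'a set set \<Rightarrow> bool" where
  "topological_basis_of X \<B> \<longleftrightarrow> openin X = arbitrary union_of (\<lambda>U. U \<in> \<B>)"

definition approx_rel_axioms123 :: "'a topology \<Rightarrow> 'a set set \<Rightarrow> ('a set \<Rightarrow> 'a set \<Rightarrow> bool) \<Rightarrow> bool" where
  "approx_rel_axioms123 X \<B> R \<longleftrightarrow>
     topological_basis_of X \<B> \<and>
     (\<forall>U\<in>\<B>. \<forall>V\<in>\<B>. R U V \<longrightarrow> V \<subseteq> U) \<and>
     (\<forall>U\<in>\<B>. \<forall>V\<in>\<B>. \<forall>T\<in>\<B>. U \<subseteq> T \<and> R U V \<longrightarrow> R T V) \<and>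
     (\<forall>U\<in>\<B>. \<forall>x\<in>U. \<exists>W\<in>\<B>. x \<in> W \<and> R U W)"

definition approximation_relation :: "'a topology \<Rightarrow> 'a set set \<Rightarrow> ('a set \<Rightarrow> 'a set \<Rightarrow> bool) \<Rightarrow> bool" where
  "approximation_relation X \<B> R \<longleftrightarrow>
     approx_rel_axioms123 X \<B> R \<and>
     (\<forall>Us :: nat \<Rightarrow> 'a set. (\<forall>i. Us i \<in> \<B>) \<and> (\<forall>i. R (Us i) (Us (Suc i)))
        \<longrightarrow> (\<Inter>i. Us i) \<noteq> {})"

definition convergent_approximation_relation :: "'a topology \<Rightarrow> 'a set set \<Rightarrow> ('a set \<Rightarrow> 'a set \<Rightarrow> bool) \<Rightarrow> bool" where
  "convergent_approximation_relation X \<B> R \<longleftrightarrow>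
     approx_rel_axioms123 X \<B> R \<and>
     (\<forall>Us :: nat \<Rightarrow> 'a set. (\<forall>i. Us i \<in> \<B>) \<and> (\<forall>i. R (Us i) (Us (Suc i)))
        \<longrightarrow> (\<exists>x \<in> (\<Inter>i. Us i).
               (\<forall>i. x \<in> Us i) \<and>
               (\<forall>V. openin X V \<and> x \<in> V \<longrightarrow> (\<exists>i. Us i \<subseteq> V))))"

definition convergent_approximation_space :: "'a topology \<Rightarrow> bool" where
  "convergent_approximation_space X \<longleftrightarrow>
     (\<exists>\<B> R. convergent_approximation_relation X \<B> R)"

definition Polish_space :: "'a topology \<Rightarrow> bool" where
  "Polish_space X \<longleftrightarrow> completely_metrizable_space X \<and> separable_space X"

definition directed_set :: "'a::order set \<Rightarrow> bool" where
  "directed_set S \<longleftrightarrow> S \<noteq> {} \<and> (\<forall>x\<in>S. \<forall>y\<in>S. \<exists>z\<in>S. x \<le> z \<and> y \<le> z)"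

definition is_sup :: "'a::order set \<Rightarrow> 'a \<Rightarrow> bool" where
  "is_sup S s \<longleftrightarrow> (\<forall>x\<in>S. x \<le> s) \<and> (\<forall>u. (\<forall>x\<in>S. x \<le> u) \<longrightarrow> s \<le> u)"

text \<open>The whole type, with its order, is the poset.\<close>
definition dcpo :: "'a::order itself \<Rightarrow> bool" where
  "dcpo _ \<longleftrightarrow> (\<forall>S :: 'a set. directed_set S \<longrightarrow> (\<exists>s. is_sup S s))"

definition scott_open :: "'a::order set \<Rightarrow> bool" where
  "scott_open A \<longleftrightarrow>
     (\<forall>x y. x \<in> A \<and> x \<le> y \<longrightarrow> y \<in> A) \<and>
     (\<forall>S s. directed_set S \<and> is_sup S s \<and> s \<in> A \<longrightarrow> S \<inter> A \<noteq> {})"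

definition scott_topology :: "'a::order topology" where
  "scott_topology = topology scott_open"

definition way_below :: "'a::order \<Rightarrow> 'a \<Rightarrow> bool" where
  "way_below x y \<longleftrightarrow>
     (\<forall>S s. directed_set S \<and> is_sup S s \<and> y \<le> s \<longrightarrow> (\<exists>t\<in>S. x \<le> t))"

definition continuous_domain :: "'a::order itself \<Rightarrow> bool" where
  "continuous_domain T \<longleftrightarrow> dcpo T \<and>
     (\<forall>x::'a. directed_set {z. way_below z x} \<and> is_sup {z. way_below z x} x)"

end

theory Submission
  imports Defs
begin


lemma so_up: "scott_open U \<Longrightarrow> x \<in> U \<Longrightarrow> x \<le> y \<Longrightarrow> y \<in> U"
  unfolding scott_open_def by blast
lemma so_dir: "scott_open U \<Longrightarrow> directed_set S \<Longrightarrow> is_sup S s \<Longrightarrow> s \<in> U \<Longrightarrow> \<exists>t\<in>S. t \<in> U"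
  unfolding scott_open_def by blast

lemma directed_single: "directed_set {y}" by (simp add: directed_set_def)
lemma is_sup_single: "is_sup {y} y" by (simp add: is_sup_def)

lemma wb_le: "way_below x y \<Longrightarrow> x \<le> y"
  unfolding way_below_def using directed_single is_sup_single by fastforce

lemma wb_mono: "x \<le> x' \<Longrightarrow> way_below x' y \<Longrightarrow> y \<le> y' \<Longrightarrow> way_below x y'"
  unfolding way_below_def by (meson order.trans)

lemma interpolate:
  assumes cd: "continuous_domain (T::'b::order itself)" and zy: "way_below (z::'b) y"
  shows "\<exists>v. way_below z v \<and> way_below v y"
proof -
  have dir: "\<And>x::'b. directed_set {z. way_below z x}" and sup: "\<And>x::'b. is_sup {z. way_below z x} x"
    using cd unfolding continuous_domain_def by auto
  define D where "D = {w. \<exists>v. way_below w v \<and> way_below v y}"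
  have "directed_set D"
    unfolding directed_set_def
  proof (intro conjI ballI)
    obtain v where v: "way_below v y" using dir[of y] unfolding directed_set_def by auto
    obtain w where "way_below w v" using dir[of v] unfolding directed_set_def by auto
    then show "D \<noteq> {}" using v D_def by auto
  next
    fix w1 w2 assume "w1 \<in> D" "w2 \<in> D"
    then obtain v1 v2 where a: "way_below w1 v1" "way_below v1 y" "way_below w2 v2" "way_below v2 y"
      unfolding D_def by auto
    then obtain v3 where b: "way_below v3 y" "v1 \<le> v3" "v2 \<le> v3"
      using dir[of y] unfolding directed_set_def by auto
    have "way_below w1 v3" "way_below w2 v3" using a b wb_mono by blast+
    then obtain w3 where "way_below w3 v3" "w1 \<le> w3" "w2 \<le> w3"
      using dir[of v3] unfolding directed_set_def by auto
    then show "\<exists>z\<in>D. w1 \<le> z \<and> w2 \<le> z" using b D_def by auto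
  qed
  moreover have "is_sup D y"
    unfolding is_sup_def
  proof (intro conjI allI impI ballI)
    fix x assume "x \<in> D"
    then obtain v where "way_below x v" "way_below v y" unfolding D_def by blast
    then have "x \<le> v" "v \<le> y" using wb_le by blast+
    then show "x \<le> y" by (rule order.trans)
  next
    fix u assume u: "\<forall>x\<in>D. x \<le> u"
    have "v \<le> u" if "way_below v y" for v
    proof -
      have "\<forall>x\<in>{z. way_below z v}. x \<le> u" using u that D_def by auto
      then show ?thesis using sup[of v] unfolding is_sup_def by auto
    qed
    then show "y \<le> u" using sup[of y] unfolding is_sup_def by auto
  qed
  ultimately obtain t where "t \<in> D" "z \<le> t" using zy unfolding way_below_def by blast
  then show ?thesis unfolding D_def using wb_mono by blast
qed

lemma wb_open:
  assumes cd: "continuous_domain (T::'b::order itself)"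
  shows "scott_open {y::'b. way_below z y}"
  unfolding scott_open_def
proof (intro conjI allI impI)
  fix x y :: 'b assume "x \<in> {y. way_below z y} \<and> x \<le> y"
  then show "y \<in> {y. way_below z y}" using wb_mono by blast
next
  fix S and s :: 'b assume a: "directed_set S \<and> is_sup S s \<and> s \<in> {y. way_below z y}"
  then obtain v where "way_below z v" "way_below v s" using interpolate[OF cd] by blast
  moreover then obtain t where "t \<in> S" "v \<le> t" using a unfolding way_below_def by blast
  ultimately show "S \<inter> {y. way_below z y} \<noteq> {}" using wb_mono by blast
qed

lemma istop_scott: "istopology (scott_open :: 'a::order set \<Rightarrow> bool)"
  unfolding istopology_def
proof (intro conjI allI impI ballI)
  fix S T :: "'a set" assume a: "scott_open S" "scott_open T"
  show "scott_open (S \<inter> T)"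
    unfolding scott_open_def
  proof (intro conjI allI impI)
    fix x y assume "x \<in> S \<inter> T \<and> x \<le> y" then show "y \<in> S \<inter> T"
      using a unfolding scott_open_def by blast
  next
    fix D s assume b: "directed_set D \<and> is_sup D s \<and> s \<in> S \<inter> T"
    then obtain t1 t2 where "t1 \<in> D \<inter> S" "t2 \<in> D \<inter> T" using a unfolding scott_open_def by blast
    moreover then obtain t3 where "t3 \<in> D" "t1 \<le> t3" "t2 \<le> t3" using b unfolding directed_set_def by blast
    ultimately show "D \<inter> (S \<inter> T) \<noteq> {}" using a unfolding scott_open_def by blast
  qed
next
  fix K :: "'a set set" assume a: "\<forall>S\<in>K. scott_open S"
  show "scott_open (\<Union>K)"
    unfolding scott_open_def
  proof (intro conjI allI impI)
    fix x y assume "x \<in> \<Union>K \<and> x \<le> y" then show "y \<in> \<Union>K"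
      using a unfolding scott_open_def by blast
  next
    fix D s assume b: "directed_set D \<and> is_sup D s \<and> s \<in> \<Union>K"
    then obtain S where "S \<in> K" "s \<in> S" by auto
    then show "D \<inter> \<Union>K \<noteq> {}" using a b unfolding scott_open_def by blast
  qed
qed

lemma openin_scott: "openin (scott_topology :: 'a::order topology) = scott_open"
  unfolding scott_topology_def using istop_scott topology_inverse' by blast

lemma domain_part:
  assumes cd: "continuous_domain TYPE('b::order)"
  shows "convergent_approximation_space (scott_topology :: 'b topology)"
proof -
  have dir: "\<And>x::'b. directed_set {z. way_below z x}" and sup: "\<And>x::'b. is_sup {z. way_below z x} x"
    and dcpo: "dcpo TYPE('b)"
    using cd unfolding continuous_domain_def by auto
  define B where "B = {U::'b set. scott_open U}"
  define R where "R = (\<lambda>U V::'b set. V \<noteq> {} \<and> (\<exists>x\<in>U. \<forall>y\<in>V. x \<le> y))"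
  have "approx_rel_axioms123 scott_topology B R"
    unfolding approx_rel_axioms123_def topological_basis_of_def
  proof (intro conjI ballI impI allI)
    show "openin scott_topology = arbitrary union_of (\<lambda>U. U \<in> B)"
      by (subst openin_topology_base_unique) (auto simp: B_def openin_scott)
  next
    fix U V assume "U \<in> B" "V \<in> B" "R U V" then show "V \<subseteq> U"
      unfolding R_def B_def using so_up by blast
  next
    fix U V T assume "U \<subseteq> T \<and> R U V" then show "R T V" unfolding R_def by blast
  next
    fix U x assume U: "U \<in> B" "x \<in> U"
    then obtain z where z: "z \<in> {z. way_below z x}" "z \<in> U"
      using so_dir[OF _ dir[of x] sup[of x]] unfolding B_def by blast
    show "\<exists>W\<in>B. x \<in> W \<and> R U W"
    proof (rule bexI[of _ "{y. way_below z y}"])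
      show "{y. way_below z y} \<in> B" using wb_open[OF cd, of z] unfolding B_def by simp
      have "\<forall>y\<in>{y. way_below z y}. z \<le> y" using wb_le by blast
      then have "R U {y. way_below z y}" unfolding R_def using z by blast
      then show "x \<in> {y. way_below z y} \<and> R U {y. way_below z y}" using z by simp
    qed
  qed
  moreover have "\<exists>x\<in>\<Inter>i. Us i. (\<forall>i. x \<in> Us i) \<and>
          (\<forall>V. openin scott_topology V \<and> x \<in> V \<longrightarrow> (\<exists>i. Us i \<subseteq> V))"
    if a: "(\<forall>i. Us i \<in> B) \<and> (\<forall>i. R (Us i) (Us (Suc i)))" for Us
  proof -
    have "\<forall>i. \<exists>x\<in>Us i. \<forall>y\<in>Us (Suc i). x \<le> y" using a unfolding R_def by blast
    then obtain c where c: "\<And>i. c i \<in> Us i" "\<And>i y. y \<in> Us (Suc i) \<Longrightarrow> c i \<le> y" by (metis (no_types))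
    have mono: "c i \<le> c j" if "i \<le> j" for i j
      using that
    proof (induction j)
      case 0 then show ?case by simp
    next
      case (Suc j)
      show ?case
      proof (cases "i = Suc j")
        case True then show ?thesis by simp
      next
        case False
        then have "c i \<le> c j" using Suc by simp
        moreover have "c j \<le> c (Suc j)" using c(2) c(1)[of "Suc j"] by blast
        ultimately show ?thesis by (rule order.trans)
      qed
    qed
    have "directed_set (range c)" unfolding directed_set_def
    proof (intro conjI ballI)
      fix x y assume "x \<in> range c" "y \<in> range c"
      then obtain i j where "x = c i" "y = c j" by blast
      moreover have "c i \<le> c (max i j)" "c j \<le> c (max i j)" by (auto intro: mono)
      ultimately show "\<exists>z\<in>range c. x \<le> z \<and> y \<le> z" by blast
    qed simp
    then obtain s where s: "is_sup (range c) s" using dcpo unfolding dcpo_def by blast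
    have sin: "s \<in> Us i" for i
    proof -
      have "c i \<le> s" using s unfolding is_sup_def by blast
      then show ?thesis using so_up[OF _ c(1)[of i]] a unfolding B_def by blast
    qed
    have sI: "s \<in> (\<Inter>i. Us i)" using sin by blast
    show ?thesis
    proof (intro bexI[OF _ sI] conjI allI impI)
      fix V assume V: "openin scott_topology V \<and> s \<in> V"
      then obtain i where "c i \<in> V" using so_dir[OF _ \<open>directed_set (range c)\<close> s] 
        unfolding openin_scott by blast
      then have "Us (Suc i) \<subseteq> V" using c(2) V so_up unfolding openin_scott by blast
      then show "\<exists>i. Us i \<subseteq> V" by blast
    qed (use sin in blast)
  qed
  ultimately have "convergent_approximation_relation scott_topology B R"
    unfolding convergent_approximation_relation_def by blast
  then show ?thesis
    unfolding convergent_approximation_space_def by blast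
qed



context Metric_space begin

lemma polish_part:
  assumes comp: "mcomplete"
  shows "convergent_approximation_space mtopology"
proof -
  define S where "S = (\<lambda>n U. \<exists>a. U \<subseteq> mball a ((1/2::real)^n))"
  define B where "B = {U. openin mtopology U}"
  define R where "R = (\<lambda>U V. V \<noteq> {} \<and> mtopology closure_of V \<subseteq> U \<and>
                          (\<forall>n. S n U \<longrightarrow> S (Suc n) V) \<and> S 0 V)"
  have Smono: "S n U" if "S n T" "U \<subseteq> T" for n U T
    using that unfolding S_def by blast
  have Sle: "S m U" if h1: "S n U" and h2: "m \<le> n" for n m U
  proof -
    obtain a where "U \<subseteq> mball a ((1/2::real)^n)" using h1 unfolding S_def by blast
    moreover have "mball a ((1/2::real)^n) \<subseteq> mball a ((1/2::real)^m)"
      by (rule mball_subset_concentric) (simp add: power_decreasing h2)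
    ultimately show ?thesis unfolding S_def by blast
  qed
  have clos_ball: "mtopology closure_of mball x r \<subseteq> mcball x r" for x r
    by (rule closure_of_minimal) (auto simp: mball_subset_mcball)
  have "approx_rel_axioms123 mtopology B R"
    unfolding approx_rel_axioms123_def topological_basis_of_def
  proof (intro conjI ballI impI allI)
    show "openin mtopology = arbitrary union_of (\<lambda>U. U \<in> B)"
      by (subst openin_topology_base_unique) (auto simp: B_def)
  next
    fix U V assume "U \<in> B" "V \<in> B" "R U V"
    then have "openin mtopology V" "mtopology closure_of V \<subseteq> U"
      unfolding R_def B_def by auto
    then have "V \<subseteq> topspace mtopology" "mtopology closure_of V \<subseteq> U"
      using openin_subset[of mtopology V] by blast+
    then show "V \<subseteq> U" using closure_of_subset[of V mtopology] by blast
  next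
    fix U V T assume "U \<subseteq> T \<and> R U V" then show "R T V"
      unfolding R_def using Smono by blast
  next
    fix U x assume U: "U \<in> B" "x \<in> U"
    then have oU: "openin mtopology U" unfolding B_def by simp
    then obtain r0 where r0: "r0 > 0" "mball x r0 \<subseteq> U"
      using U(2) openin_mtopology by blast
    have xM: "x \<in> M" using oU U(2) openin_subset by fastforce
    have main: "\<exists>W\<in>B. x \<in> W \<and> R U W" if r: "0 < r" "r \<le> r0/2"
        and Sc: "\<And>n. S n U \<Longrightarrow> S (Suc n) (mball x r)" and S0: "S 0 (mball x r)" for r
    proof (rule bexI[of _ "mball x r"])
      show "mball x r \<in> B" unfolding B_def by simp
      have "mtopology closure_of mball x r \<subseteq> mcball x r" by (rule clos_ball)
      also have "\<dots> \<subseteq> mball x r0" by (rule mcball_subset_mball_concentric) (use r r0 in simp)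
      finally have "mtopology closure_of mball x r \<subseteq> U" using r0 by blast
      moreover have "mball x r \<noteq> {}" using xM r by auto
      ultimately show "x \<in> mball x r \<and> R U (mball x r)"
        unfolding R_def using Sc S0 xM r by auto
    qed
    show "\<exists>W\<in>B. x \<in> W \<and> R U W"
    proof (cases "\<forall>n. S n U")
      case True
      have "r0/2 \<le> r0" using r0 by simp
      then have sub: "mball x (r0/2) \<subseteq> U" using mball_subset_concentric[of "r0/2" r0 x] r0 by blast
      show ?thesis
      proof (rule main[of "r0/2"])
        show "S 0 (mball x (r0/2))"
          using True Smono sub by blast
        fix n show "S (Suc n) (mball x (r0/2))"
          using True Smono sub by blast
      qed (use r0 in auto)
    next
      case False
      then obtain N where N: "\<not> S N U" by blast
      define r where "r = min (r0/2) ((1/2::real)^(Suc N))"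
      show ?thesis
      proof (rule main[of r])
        show "0 < r" "r \<le> r0/2" using r0 unfolding r_def by auto
        have h1: "(1/2::real)^(Suc N) \<le> 1" by (rule power_le_one) auto
        have "r \<le> 1" unfolding r_def by (rule min.coboundedI2[OF h1])
        then have "mball x r \<subseteq> mball x ((1/2::real)^0)" by (intro mball_subset_concentric) simp
        then show "S 0 (mball x r)" unfolding S_def by blast
        fix n assume "S n U"
        have "n < N"
        proof (rule ccontr)
          assume "\<not> n < N"
          then have "N \<le> n" by simp
          then have "S N U" using Sle[OF \<open>S n U\<close>] by blast
          with N show False ..
        qed
        then have h2: "(1/2::real)^(Suc N) \<le> (1/2::real)^(Suc n)"
          by (intro power_decreasing) auto
        have "r \<le> (1/2::real)^(Suc n)" unfolding r_def by (rule min.coboundedI2[OF h2])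
        then have "mball x r \<subseteq> mball x ((1/2::real)^(Suc n))" by (rule mball_subset_concentric)
        then show "S (Suc n) (mball x r)" unfolding S_def by blast
      qed
    qed
  qed
  moreover have "\<exists>x\<in>\<Inter>i. Us i. (\<forall>i. x \<in> Us i) \<and>
          (\<forall>V. openin mtopology V \<and> x \<in> V \<longrightarrow> (\<exists>i. Us i \<subseteq> V))"
    if a: "(\<forall>i. Us i \<in> B) \<and> (\<forall>i. R (Us i) (Us (Suc i)))" for Us
  proof -
    have Rs: "\<And>i. R (Us i) (Us (Suc i))" and oUs: "\<And>i. openin mtopology (Us i)"
      using a unfolding B_def by auto
    have UM: "Us i \<subseteq> M" for i using oUs openin_subset by fastforce
    have Ssm: "S i (Us (Suc i))" for i
    proof (induction i)
      case 0 then show ?case using Rs[of 0] unfolding R_def by blast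
    next
      case (Suc i) then show ?case using Rs[of "Suc i"] unfolding R_def by blast
    qed
    then have "\<forall>i. \<exists>a. Us (Suc i) \<subseteq> mball a ((1/2::real)^i)" unfolding S_def by blast
    from choice[OF this] obtain b where b: "\<And>i. Us (Suc i) \<subseteq> mball (b i) ((1/2::real)^i)"
      by blast
    define C where "C = (\<lambda>n. mtopology closure_of Us (Suc n))"
    have CU: "C n \<subseteq> Us n" for n using Rs[of n] unfolding C_def R_def by blast
    have UC: "Us (Suc n) \<subseteq> C n" for n
    proof -
      have "Us (Suc n) \<subseteq> topspace mtopology" using UM by simp
      then show ?thesis unfolding C_def by (rule closure_of_subset)
    qed
    have "\<Inter> (range C) \<noteq> {}"
    proof (rule comp[unfolded mcomplete_nest, rule_format], intro conjI allI impI)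
      fix n show "closedin mtopology (C n)" unfolding C_def by simp
      show "C n \<noteq> {}" using UC[of n] Rs[of n] unfolding R_def by blast
    next
      show "decseq C" unfolding decseq_Suc_iff
      proof
        fix n show "C (Suc n) \<subseteq> C n" using CU[of "Suc n"] UC[of n] by (rule order.trans)
      qed
    next
      fix e :: real assume "e > 0"
      then obtain n where n: "(1/2::real)^n < e" using real_arch_pow_inv[of e "1/2"] by auto
      have "C n \<subseteq> mtopology closure_of mball (b n) ((1/2::real)^n)"
        unfolding C_def by (rule closure_of_mono[OF b])
      also have "\<dots> \<subseteq> mcball (b n) ((1/2::real)^n)" by (rule clos_ball)
      also have "\<dots> \<subseteq> mcball (b n) e" using n by (intro mcball_subset_concentric) simp
      finally show "\<exists>n a. C n \<subseteq> mcball a e" by blast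
    qed
    then obtain z where z: "\<And>n. z \<in> C n" by blast
    have zU: "z \<in> Us i" for i using z CU by blast
    show ?thesis
    proof (intro bexI conjI allI impI)
      fix V assume V: "openin mtopology V \<and> z \<in> V"
      then obtain r where r: "r > 0" "mball z r \<subseteq> V" using openin_mtopology by blast
      obtain n where n: "(1/2::real)^n < r/2" using real_arch_pow_inv[of "r/2" "1/2"] r by auto
      have "Us (Suc n) \<subseteq> mball z r"
      proof
        fix y assume y: "y \<in> Us (Suc n)"
        have zb: "z \<in> mball (b n) ((1/2::real)^n)" using b zU by blast
        have yb: "y \<in> mball (b n) ((1/2::real)^n)" using b y by blast
        have "d z y \<le> d z (b n) + d (b n) y" using zb yb triangle[of z "b n" y] by simp
        also have "\<dots> < r" using zb yb n commute[of z "b n"] by simp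
        finally show "y \<in> mball z r" using zb yb by simp
      qed
      then show "\<exists>i. Us i \<subseteq> V" using r by blast
    qed (use zU in auto)
  qed
  ultimately have "convergent_approximation_relation mtopology B R"
    unfolding convergent_approximation_relation_def by blast
  then show ?thesis
    unfolding convergent_approximation_space_def by blast
qed

end


theorem proposition3p5:
  fixes X :: "'a topology"
  shows "(Polish_space X \<longrightarrow> convergent_approximation_space X) \<and>
         (continuous_domain TYPE('b::order) \<longrightarrow>
            convergent_approximation_space (scott_topology :: 'b topology))"
proof (intro conjI impI)
  assume "Polish_space X"
  then obtain M d where "Metric_space M d" "Metric_space.mcomplete M d" "X = Metric_space.mtopology M d"
    unfolding Polish_space_def completely_metrizable_space_def by blast
  then show "convergent_approximation_space X" using Metric_space.polish_part by blast
next
  assume "continuous_domain TYPE('b::order)"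
  then show "convergent_approximation_space (scott_topology :: 'b topology)" by (rule domain_part)
qed

end
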